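(* For every partition $\lambda$, the dual equivalence graph $\mathsf{DE}(\lambda)$ is a subgraph of the crystal skeleton $\mathsf{CS}(\lambda)$, when edge labels and edge directions are disregarded.
   Context: French notation for tableaux; $|\lambda|=N$; $\mathsf{SYT}(\lambda)$ = standard Young tableaux of shape $\lambda$; $\mathsf{SSYT}(\lambda)_n$ = semistandard tableaux with entries in $[n]$. The reading word $\mathsf{row}(b)$ reads rows left to right from the top row down to the bottom row. The standardization $\mathsf{std}(b)$ replaces the $a_j$ entries equal to $j$, in reading order, by $a_1+\dots+a_{j-1}+1,\dots,a_1+\dots+a_j$. Crystal operators on $B(\lambda)_n=\mathsf{SSYT}(\lambda)_n$: in the subword of $\mathsf{row}(b)$ of letters $i,i+1$, bracket each $i+1$ with an unbracketed $i$ to its right (parenthesis matching, $i+1$ opening); the unbracketed letters form $i^r(i+1)^s$; $f_i$ changes the rightmost unbracketed $i$ to $i+1$ ($\emptyset$ if $r=0$). Fix $n\ge N$; for $T\in\mathsf{SYT}(\lambda)$ let $Q_T=\{b:\mathsf{std}(b)=T\}$. The crystal skeleton $\mathsf{CS}(\lambda)$ is the directed graph on $\mathsf{SYT}(\lambda)$ with an edge $T\to T'$ ($T\neq T'$) whenever $f_i(b)=b'$ for some $b\in Q_T$, $b'\in Q_{T'}$, $i$. The dual equivalence graph $\mathsf{DE}(\lambda)$ has vertex set $\mathsf{SYT}(\lambda)$ and an edge between $T$ and $T'$ whenever $T'=D_i(T)$ for some $1<i<N$, where $D_i$ acts on the permutation $\mathsf{row}(T)$ as follows: if the letters $i-1,i,i+1$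 occur in the relative order $i,\,i+1,\,i-1$ it swaps them to the order $i-1,\,i+1,\,i$ (and conversely), and if they occur in the order $i,\,i-1,\,i+1$ it swaps to $i+1,\,i-1,\,i$ (and conversely), i.e. $D_i$ interchanges $i$ with whichever of $i\pm1$ is farther from it in position-order as listed; $D_i$ is undefined for the other relative orders. (Explicitly: $\ldots i\ldots i{+}1\ldots i{-}1\ldots \leftrightarrow \ldots i{-}1\ldots i{+}1\ldots i\ldots$ and $\ldots i\ldots i{-}1\ldots i{+}1\ldots\leftrightarrow\ldots i{+}1\ldots i{-}1\ldots i\ldots$.) This preserves descents, so it defines an operation on standard tableaux via reading words. *)

theory Defs
  imports Main
begin

(* Partitions: weakly decreasing lists of positive naturals (row lengths, bottom row first). *)
definition is_partition :: "nat list \<Rightarrow> bool" where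
  "is_partition la \<longleftrightarrow> sorted (rev la) \<and> (\<forall>x\<in>set la. 0 < x)"

definition psize :: "nat list \<Rightarrow> nat" where
  "psize la = sum_list la"

(* Tableaux in French notation: a list of rows, row 0 is the bottom (longest) row. *)
type_synonym tableau = "nat list list"

definition row_word :: "tableau \<Rightarrow> nat list" where
  "row_word T = concat (rev T)"

definition has_shape :: "nat list \<Rightarrow> tableau \<Rightarrow> bool" where
  "has_shape la T \<longleftrightarrow> map length T = la"

definition is_SSYT :: "nat list \<Rightarrow> nat \<Rightarrow> tableau \<Rightarrow> bool" where
  "is_SSYT la n T \<longleftrightarrow> has_shape la T
     \<and> (\<forall>r\<in>set T. sorted r)
     \<and> (\<forall>i j. Suc i < length T \<longrightarrow> j < length (T ! Suc i) \<longrightarrow> T ! i ! j < T ! Suc i ! j)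
     \<and> set (concat T) \<subseteq> {1..n}"

definition is_SYT :: "nat list \<Rightarrow> tableau \<Rightarrow> bool" where
  "is_SYT la T \<longleftrightarrow> has_shape la T
     \<and> (\<forall>r\<in>set T. sorted_wrt (<) r)
     \<and> (\<forall>i j. Suc i < length T \<longrightarrow> j < length (T ! Suc i) \<longrightarrow> T ! i ! j < T ! Suc i ! j)
     \<and> distinct (concat T) \<and> set (concat T) = {1..psize la}"

(* Standardization of a word: the entries equal to j, in order, are replaced by
   a_1+...+a_{j-1}+1, ..., a_1+...+a_j. *)
definition std_word :: "nat list \<Rightarrow> nat list" where
  "std_word w = map (\<lambda>p. card {q. q < length w \<and> w ! q < w ! p}
                         + card {q. q < p \<and> w ! q = w ! p} + 1) [0..<length w]"

(* std(b) = T  (for b, T of the same shape) iff row(T) = std(row(b)) *)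
definition Q_set :: "nat list \<Rightarrow> nat \<Rightarrow> tableau \<Rightarrow> tableau set" where
  "Q_set la n T = {b. is_SSYT la n b \<and> row_word T = std_word (row_word b)}"

(* Positions of unbracketed letters i in a word (i+1 opens, i closes), scanning left to right
   with k currently unmatched (i+1)'s, p = current position. *)
fun unbr :: "nat \<Rightarrow> nat \<Rightarrow> nat \<Rightarrow> nat list \<Rightarrow> nat list" where
  "unbr i k p [] = []"
| "unbr i k p (x # xs) =
     (if x = Suc i then unbr i (Suc k) (Suc p) xs
      else if x = i then (if 0 < k then unbr i (k - 1) (Suc p) xs else p # unbr i k (Suc p) xs)
      else unbr i k (Suc p) xs)"

definition f_word :: "nat \<Rightarrow> nat list \<Rightarrow> nat list option" where
  "f_word i w = (let U = unbr i 0 0 w in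
                  if U = [] then None else Some (w[last U := Suc i]))"

definition crystal_f :: "nat \<Rightarrow> nat \<Rightarrow> tableau \<Rightarrow> tableau \<Rightarrow> bool" where
  "crystal_f n i b b' \<longleftrightarrow> 1 \<le> i \<and> i < n \<and> f_word i (row_word b) = Some (row_word b')"

definition CS_edge :: "nat list \<Rightarrow> nat \<Rightarrow> tableau \<Rightarrow> tableau \<Rightarrow> bool" where
  "CS_edge la n T T' \<longleftrightarrow> is_SYT la T \<and> is_SYT la T' \<and> T \<noteq> T'
     \<and> (\<exists>i b b'. b \<in> Q_set la n T \<and> b' \<in> Q_set la n T' \<and> crystal_f n i b b')"

definition pos_of :: "nat list \<Rightarrow> nat \<Rightarrow> nat" where
  "pos_of w x = (LEAST p. p < length w \<and> w ! p = x)"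

definition swap_vals :: "nat \<Rightarrow> nat \<Rightarrow> nat list \<Rightarrow> nat list" where
  "swap_vals a c w = map (\<lambda>x. if x = a then c else if x = c then a else x) w"

definition between :: "nat \<Rightarrow> nat \<Rightarrow> nat \<Rightarrow> bool" where
  "between x y z \<longleftrightarrow> (x < y \<and> y < z) \<or> (z < y \<and> y < x)"

definition D_word :: "nat \<Rightarrow> nat list \<Rightarrow> nat list option" where
  "D_word i w =
    (let pa = pos_of w (i - 1); pb = pos_of w i; pc = pos_of w (Suc i) in
     if between pb pc pa then Some (swap_vals (i - 1) i w)
     else if between pb pa pc then Some (swap_vals i (Suc i) w)
     else None)"

definition DE_edge :: "nat list \<Rightarrow> tableau \<Rightarrow> tableau \<Rightarrow> bool" where
  "DE_edge la T T' \<longleftrightarrow> is_SYT la T \<and> is_SYT la T'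
     \<and> (\<exists>i. 1 < i \<and> i < psize la \<and> D_word i (row_word T) = Some (row_word T'))"

end

theory Submission
  imports Defs
begin

definition mrg :: "nat \<Rightarrow> nat \<Rightarrow> nat" where
  "mrg a v = (if v \<le> a then v else v - 1)"

lemma card_pos_filter:
  assumes "distinct w"
  shows "card {q. q < length w \<and> P (w ! q)} = card {u \<in> set w. P u}"
proof -
  have "card {q. q < length w \<and> P (w ! q)} = length (filter P w)"
    by (simp add: length_filter_conv_card)
  also have "\<dots> = card {u \<in> set w. P u}"
    using distinct_length_filter[OF assms] by (simp add: Int_def conj_commute)
  finally show ?thesis .
qed

lemma std_merge:
  assumes d: "distinct w" and s: "set w = {1..N}" and a1: "1 \<le> a" and aN: "a < N"
    and ord: "\<forall>q1 q2. q1 < length w \<longrightarrow> q2 < length w \<longrightarrow> w ! q1 = a \<longrightarrow> w ! q2 = Suc a \<longrightarrow> q1 < q2"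
  shows "std_word (map (mrg a) w) = w"
proof (rule nth_equalityI)
  show "length (std_word (map (mrg a) w)) = length w" by (simp add: std_word_def)
next
  fix p assume p: "p < length (std_word (map (mrg a) w))"
  hence pl: "p < length w" by (simp add: std_word_def)
  define v where "v = w ! p"
  have vin: "v \<in> {1..N}" using s pl v_def nth_mem by blast
  have eq: "std_word (map (mrg a) w) ! p =
     card {q. q < length w \<and> mrg a (w ! q) < mrg a v} + card {q. q < p \<and> mrg a (w ! q) = mrg a v} + 1"
  proof -
    have "{q. q < length (map (mrg a) w) \<and> map (mrg a) w ! q < map (mrg a) w ! p}
        = {q. q < length w \<and> mrg a (w ! q) < mrg a v}" using pl v_def by auto
    moreover have "{q. q < p \<and> map (mrg a) w ! q = map (mrg a) w ! p}
        = {q. q < p \<and> mrg a (w ! q) = mrg a v}" using pl v_def by auto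
    ultimately show ?thesis using pl by (simp add: std_word_def)
  qed
  have c1: "card {q. q < length w \<and> mrg a (w ! q) < mrg a v} = card {u \<in> {1..N}. mrg a u < mrg a v}"
    using card_pos_filter[OF d] s by simp
  show "std_word (map (mrg a) w) ! p = w ! p"
  proof (cases "v = Suc a")
    case True
    have "a \<in> set w" using s a1 aN by auto
    then obtain q1 where q1: "q1 < length w" "w ! q1 = a" by (auto simp: in_set_conv_nth)
    have "q1 < p" using ord q1 pl True v_def by auto
    have "{q. q < p \<and> mrg a (w ! q) = mrg a v} = {q1}"
    proof safe
      fix q assume q: "q < p" "mrg a (w ! q) = mrg a v"
      have "w ! q \<noteq> v" using q pl d v_def nth_eq_iff_index_eq by fastforce
      hence "w ! q = a" using q True by (auto simp: mrg_def split: if_splits)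
      thus "q = q1" using q q1 pl d nth_eq_iff_index_eq by fastforce
    qed (use \<open>q1 < p\<close> q1 True in \<open>auto simp: mrg_def\<close>)
    moreover have "{u \<in> {1..N}. mrg a u < mrg a v} = {1..<a}"
      using True aN by (auto simp: mrg_def)
    ultimately show ?thesis using eq c1 True v_def a1 by simp
  next
    case False
    have "False" if q: "q < p" "mrg a (w ! q) = mrg a v" for q
    proof -
      have "w ! q \<noteq> v" using q pl d v_def nth_eq_iff_index_eq by fastforce
      hence "w ! q = Suc a \<and> v = a" using q False by (auto simp: mrg_def split: if_splits)
      hence "p < q" using ord[rule_format, of p q] q pl v_def by simp
      with q show False by simp
    qed
    hence "{q. q < p \<and> mrg a (w ! q) = mrg a v} = {}" by blast
    moreover have "{u \<in> {1..N}. mrg a u < mrg a v} = {1..<v}"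
      using False vin by (auto simp: mrg_def)
    ultimately show ?thesis using eq c1 vin v_def by simp
  qed
qed

lemma concat_order:
  assumes t: "t < length R" and x: "x \<in> set (concat (take t R))" and y: "y \<in> set (R ! t)"
  shows "\<exists>p1 p2. p1 < p2 \<and> p2 < length (concat R) \<and> concat R ! p1 = x \<and> concat R ! p2 = y"
proof -
  define A where "A = concat (take t R)"
  define C where "C = concat (drop (Suc t) R)"
  have R: "concat R = A @ (R ! t) @ C"
    using id_take_nth_drop[OF t] unfolding A_def C_def by (metis concat.simps(2) concat_append)
  obtain p1 where p1: "p1 < length A" "A ! p1 = x" using x unfolding A_def by (metis in_set_conv_nth)
  obtain p2 where p2: "p2 < length (R ! t)" "R ! t ! p2 = y" using y by (auto simp: in_set_conv_nth)
  show ?thesis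
    by (rule exI[of _ p1], rule exI[of _ "length A + p2"]) (use p1 p2 R in \<open>auto simp: nth_append\<close>)
qed

lemma mrg_mono: "x \<le> y \<Longrightarrow> mrg a x \<le> mrg a y" by (auto simp: mrg_def)

lemma mrg_strict: "x < y \<Longrightarrow> \<not> mrg a x < mrg a y \<Longrightarrow> x = a \<and> y = Suc a"
  by (auto simp: mrg_def split: if_splits)

lemma SYT_word:
  assumes "is_SYT la S"
  shows "distinct (row_word S)" "set (row_word S) = {1..psize la}" "length (row_word S) = psize la"
proof -
  show d: "distinct (row_word S)" using assms by (simp add: is_SYT_def row_word_def)
  show s: "set (row_word S) = {1..psize la}" using assms by (simp add: is_SYT_def row_word_def)
  show "length (row_word S) = psize la" using distinct_card[OF d] s by simp
qed

lemma ssyt_merge: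
  assumes P: "is_partition la" and S: "is_SYT la S" and n: "psize la \<le> n" and a1: "1 \<le> a"
    and ord: "\<forall>q1 q2. q1 < length (row_word S) \<longrightarrow> q2 < length (row_word S) \<longrightarrow>
       row_word S ! q1 = a \<longrightarrow> row_word S ! q2 = Suc a \<longrightarrow> q1 < q2"
  shows "is_SSYT la n (map (map (mrg a)) S)"
  unfolding is_SSYT_def
proof (intro conjI allI impI)
  show "has_shape la (map (map (mrg a)) S)" using S by (simp add: is_SYT_def has_shape_def comp_def)
  show "\<forall>r\<in>set (map (map (mrg a)) S). sorted r"
  proof
    fix r assume "r \<in> set (map (map (mrg a)) S)"
    then obtain r0 where r0: "r0 \<in> set S" "r = map (mrg a) r0" by auto
    have "sorted_wrt (<) r0" using S r0 by (simp add: is_SYT_def)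
    hence "sorted_wrt (\<lambda>x y. mrg a x \<le> mrg a y) r0"
      by (rule sorted_wrt_mono_rel[rotated]) (simp add: mrg_mono)
    thus "sorted r" using r0 by (simp add: sorted_wrt_map)
  qed
  show "set (concat (map (map (mrg a)) S)) \<subseteq> {1..n}"
  proof
    fix u assume "u \<in> set (concat (map (map (mrg a)) S))"
    then obtain v where v: "v \<in> set (concat S)" "u = mrg a v" by auto
    have "v \<in> {1..psize la}" using S v by (simp add: is_SYT_def)
    thus "u \<in> {1..n}" using v n a1 by (auto simp: mrg_def)
  qed
  fix i j assume i: "Suc i < length (map (map (mrg a)) S)"
    and j: "j < length (map (map (mrg a)) S ! Suc i)"
  have len: "length (S ! i) = la ! i" "length (S ! Suc i) = la ! Suc i"
    using S i by (auto simp: is_SYT_def has_shape_def)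
  have part: "\<forall>i j. Suc i < length S \<longrightarrow> j < length (S ! Suc i) \<longrightarrow> S ! i ! j < S ! Suc i ! j"
    using S by (simp add: is_SYT_def)
  have ij: "Suc i < length S" "j < length (S ! Suc i)" using i j by auto
  hence lt: "S ! i ! j < S ! Suc i ! j" using part by blast
  have ji: "j < length (S ! i)"
  proof (rule ccontr)
    assume "\<not> j < length (S ! i)"
    moreover have "la ! Suc i \<le> la ! i"
    proof -
      have sr: "sorted (rev la)" using P by (simp add: is_partition_def)
      have ll: "length la = length S" using S by (auto simp: is_SYT_def has_shape_def)
      let ?m = "length la"
      have "rev la ! (?m - Suc (Suc i)) \<le> rev la ! (?m - Suc i)"
        using sr ij ll by (intro sorted_nth_mono) auto
      thus ?thesis using ij ll by (simp add: rev_nth Suc_diff_Suc)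
    qed
    ultimately show False using ij len by simp
  qed
  show "map (map (mrg a)) S ! i ! j < map (map (mrg a)) S ! Suc i ! j"
  proof (rule ccontr)
    assume c: "\<not> ?thesis"
    have "\<not> mrg a (S ! i ! j) < mrg a (S ! Suc i ! j)" using c ij ji by simp
    from mrg_strict[OF lt this] have e: "S ! i ! j = a" "S ! Suc i ! j = Suc a" by auto
    define R where "R = rev S"
    define L where "L = length S"
    have t: "L - Suc i < length R" using ij L_def R_def by simp
    have Rt: "R ! (L - Suc i) = S ! i" using ij unfolding R_def L_def by (simp add: rev_nth)
    have Rs: "R ! (L - Suc (Suc i)) = S ! Suc i" using ij unfolding R_def L_def by (simp add: rev_nth)
    have k: "L - Suc (Suc i) < L - Suc i" "L - Suc i \<le> length R" using ij L_def R_def by auto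
    have "take (L - Suc i) R ! (L - Suc (Suc i)) = S ! Suc i" using Rs k by simp
    moreover have "L - Suc (Suc i) < length (take (L - Suc i) R)" using k by simp
    ultimately have "S ! Suc i \<in> set (take (L - Suc i) R)" by (metis nth_mem)
    then have xin: "S ! Suc i ! j \<in> set (concat (take (L - Suc i) R))" using ij proof - have "S ! Suc i ! j \<in> set (S ! Suc i)" using ij by simp thus ?thesis using \<open>S ! Suc i \<in> set (take (L - Suc i) R)\<close> by (simp only: set_concat) blast qed
    have yin: "S ! i ! j \<in> set (R ! (L - Suc i))" using Rt ji by auto
    obtain p1 p2 where pp: "p1 < p2" "p2 < length (concat R)" "concat R ! p1 = Suc a" "concat R ! p2 = a"
      using concat_order[OF t xin yin] e by auto
    have "length (concat R) = length (row_word S)" "concat R = row_word S" unfolding row_word_def R_def by auto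
    hence "p2 < p1" using ord[rule_format, of p2 p1] pp by simp
    thus False using pp by simp
  qed
qed

lemma unbr_skip:
  assumes "p0 \<le> p1" "p1 \<le> length b" "\<forall>q. p0 \<le> q \<and> q < p1 \<longrightarrow> b ! q \<noteq> i \<and> b ! q \<noteq> Suc i"
  shows "unbr i k p0 (drop p0 b) = unbr i k p1 (drop p1 b)"
  using assms
proof (induction "p1 - p0" arbitrary: p0)
  case 0 thus ?case by simp
next
  case (Suc d)
  hence lt: "p0 < length b" "p0 < p1" by auto
  have "unbr i k p0 (drop p0 b) = unbr i k (Suc p0) (drop (Suc p0) b)"
    using Suc.prems lt by (simp add: Cons_nth_drop_Suc[symmetric])
  also have "\<dots> = unbr i k p1 (drop p1 b)"
    using Suc by (intro Suc.hyps) auto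
  finally show ?case .
qed

lemma unbr_step:
  "p < length b \<Longrightarrow> unbr i k p (drop p b) =
     (if b ! p = Suc i then unbr i (Suc k) (Suc p) (drop (Suc p) b)
      else if b ! p = i then (if 0 < k then unbr i (k - 1) (Suc p) (drop (Suc p) b)
                               else p # unbr i k (Suc p) (drop (Suc p) b))
      else unbr i k (Suc p) (drop (Suc p) b))"
  by (simp add: Cons_nth_drop_Suc[symmetric])

lemma f_word_A:
  assumes o: "q1 < q3" "q3 < q2" "q2 < length b"
    and c: "\<forall>q<length b. (b ! q = x \<longleftrightarrow> q = q1 \<or> q = q2) \<and> (b ! q = Suc x \<longleftrightarrow> q = q3)"
  shows "f_word x b = Some (b[q1 := Suc x])"
proof -
  have sk: "unbr x k p0 (drop p0 b) = unbr x k p1 (drop p1 b)"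
    if "p0 \<le> p1" "p1 \<le> length b" "\<forall>q. p0 \<le> q \<and> q < p1 \<longrightarrow> q \<noteq> q1 \<and> q \<noteq> q2 \<and> q \<noteq> q3" for k p0 p1
    using that c by (intro unbr_skip) auto
  have v: "b ! q1 = x" "b ! q2 = x" "b ! q3 = Suc x" using c o by auto
  have "unbr x 0 0 b = unbr x 0 0 (drop 0 b)" by simp
  also have "\<dots> = unbr x 0 q1 (drop q1 b)" using o by (intro sk) auto
  also have "\<dots> = q1 # unbr x 0 (Suc q1) (drop (Suc q1) b)" using o v by (simp add: unbr_step)
  also have "unbr x 0 (Suc q1) (drop (Suc q1) b) = unbr x 0 q3 (drop q3 b)" using o by (intro sk) auto
  also have "\<dots> = unbr x 1 (Suc q3) (drop (Suc q3) b)" using o v by (simp add: unbr_step)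
  also have "\<dots> = unbr x 1 q2 (drop q2 b)" using o by (intro sk) auto
  also have "\<dots> = unbr x 0 (Suc q2) (drop (Suc q2) b)" using o v by (simp add: unbr_step)
  also have "\<dots> = unbr x 0 (length b) (drop (length b) b)" using o by (intro sk) auto
  also have "\<dots> = []" by simp
  finally have "unbr x 0 0 b = [q1]" .
  thus ?thesis by (simp add: f_word_def)
qed

lemma f_word_B:
  assumes o: "q3 < q1" "q1 < q2" "q2 < length b"
    and c: "\<forall>q<length b. (b ! q = x \<longleftrightarrow> q = q1 \<or> q = q2) \<and> (b ! q = Suc x \<longleftrightarrow> q = q3)"
  shows "f_word x b = Some (b[q2 := Suc x])"
proof -
  have sk: "unbr x k p0 (drop p0 b) = unbr x k p1 (drop p1 b)"
    if "p0 \<le> p1" "p1 \<le> length b" "\<forall>q. p0 \<le> q \<and> q < p1 \<longrightarrow> q \<noteq> q1 \<and> q \<noteq> q2 \<and> q \<noteq> q3" for k p0 p1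
    using that c by (intro unbr_skip) auto
  have v: "b ! q1 = x" "b ! q2 = x" "b ! q3 = Suc x" using c o by auto
  have "unbr x 0 0 b = unbr x 0 0 (drop 0 b)" by simp
  also have "\<dots> = unbr x 0 q3 (drop q3 b)" using o by (intro sk) auto
  also have "\<dots> = unbr x 1 (Suc q3) (drop (Suc q3) b)" using o v by (simp add: unbr_step)
  also have "\<dots> = unbr x 1 q1 (drop q1 b)" using o by (intro sk) auto
  also have "\<dots> = unbr x 0 (Suc q1) (drop (Suc q1) b)" using o v by (simp add: unbr_step)
  also have "\<dots> = unbr x 0 q2 (drop q2 b)" using o by (intro sk) auto
  also have "\<dots> = q2 # unbr x 0 (Suc q2) (drop (Suc q2) b)" using o v by (simp add: unbr_step)
  also have "unbr x 0 (Suc q2) (drop (Suc q2) b) = unbr x 0 (length b) (drop (length b) b)" using o by (intro sk) auto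
  also have "\<dots> = []" by simp
  finally have "unbr x 0 0 b = [q2]" .
  thus ?thesis by (simp add: f_word_def)
qed

lemma row_word_map: "row_word (map (map f) S) = map f (row_word S)"
  by (simp add: row_word_def map_concat rev_map)

lemma main_edge:
  assumes P: "is_partition la" and S: "is_SYT la S" and S': "is_SYT la S'" and n: "psize la \<le> n"
    and i1: "1 < i" and iN: "i < psize la"
    and q: "q1 < length (row_word S)" "q2 < length (row_word S)" "q3 < length (row_word S)"
    and wq: "row_word S ! q1 = i - 1" "row_word S ! q2 = i" "row_word S ! q3 = Suc i"
    and cs: "(q1 < q3 \<and> q3 < q2 \<and> row_word S' = swap_vals (i - 1) i (row_word S))
           \<or> (q3 < q1 \<and> q1 < q2 \<and> row_word S' = swap_vals i (Suc i) (row_word S))"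
  shows "CS_edge la n S S'"
proof -
  define w where "w = row_word S"
  define w' where "w' = row_word S'"
  define N where "N = psize la"
  note Sw = SYT_word[OF S, folded w_def N_def]
  note Sw' = SYT_word[OF S', folded w'_def N_def]
  have lw': "length w' = length w" using Sw Sw' by simp
  have pos: "\<And>q. q < length w \<Longrightarrow> (w ! q = i - 1 \<longleftrightarrow> q = q1) \<and> (w ! q = i \<longleftrightarrow> q = q2) \<and> (w ! q = Suc i \<longleftrightarrow> q = q3)"
    using q wq Sw(1) unfolding w_def by (metis nth_eq_iff_index_eq)
  have q12: "q1 < q2" using cs by auto
  define b where "b = map (map (mrg (i - 1))) S"
  define b' where "b' = map (map (mrg i)) S'"
  have rb: "row_word b = map (mrg (i - 1)) w" by (simp add: b_def w_def row_word_map)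
  have rb': "row_word b' = map (mrg i) w'" by (simp add: b'_def w'_def row_word_map)
  have ordA: "\<forall>p1 p2. p1 < length w \<longrightarrow> p2 < length w \<longrightarrow> w ! p1 = i - 1 \<longrightarrow> w ! p2 = Suc (i - 1) \<longrightarrow> p1 < p2"
    using pos q12 i1 by auto
  have w'nth: "\<And>q. q < length w \<Longrightarrow> w' ! q = (if q1 < q3 \<and> q3 < q2 then
       (if w ! q = i - 1 then i else if w ! q = i then i - 1 else w ! q)
     else (if w ! q = i then Suc i else if w ! q = Suc i then i else w ! q))"
    using cs unfolding w'_def w_def by (auto simp: swap_vals_def)
  have ordB: "\<forall>p1 p2. p1 < length w' \<longrightarrow> p2 < length w' \<longrightarrow> w' ! p1 = i \<longrightarrow> w' ! p2 = Suc i \<longrightarrow> p1 < p2"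
  proof (intro allI impI)
    fix p1 p2 assume a: "p1 < length w'" "p2 < length w'" "w' ! p1 = i" "w' ! p2 = Suc i"
    show "p1 < p2"
    proof (cases "q1 < q3 \<and> q3 < q2")
      case True
      hence "w ! p1 = i - 1" "w ! p2 = Suc i" using a w'nth[of p1] w'nth[of p2] lw' i1
        by (auto split: if_splits)
      thus ?thesis using pos a lw' True by auto
    next
      case False
      hence "w ! p1 = Suc i" "w ! p2 = i" using a w'nth[of p1] w'nth[of p2] lw' i1
        by (auto split: if_splits)
      thus ?thesis using pos a lw' False cs by auto
    qed
  qed
  have bQ: "b \<in> Q_set la n S"
    unfolding Q_set_def
  proof (intro CollectI conjI)
    show "is_SSYT la n b" unfolding b_def
      by (rule ssyt_merge[OF P S n]) (use i1 ordA w_def in auto)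
    show "row_word S = std_word (row_word b)"
      using std_merge[OF Sw(1) Sw(2), of "i - 1"] i1 iN ordA N_def rb w_def by simp
  qed
  have bQ': "b' \<in> Q_set la n S'"
    unfolding Q_set_def
  proof (intro CollectI conjI)
    show "is_SSYT la n b'" unfolding b'_def
      by (rule ssyt_merge[OF P S' n]) (use i1 ordB w'_def in auto)
    show "row_word S' = std_word (row_word b')"
      using std_merge[OF Sw'(1) Sw'(2), of i] i1 iN ordB N_def rb' w'_def by simp
  qed
  define c where "c = map (mrg (i - 1)) w"
  have lc: "length c = length w" by (simp add: c_def)
  have cpos: "\<forall>q<length c. (c ! q = i - 1 \<longleftrightarrow> q = q1 \<or> q = q2) \<and> (c ! q = Suc (i - 1) \<longleftrightarrow> q = q3)"
  proof (intro allI impI)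
    fix q assume ql: "q < length c"
    hence ql': "q < length w" using lc by simp
    have "c ! q = mrg (i - 1) (w ! q)" using ql' by (simp add: c_def)
    moreover have "mrg (i - 1) v = i - 1 \<longleftrightarrow> v = i - 1 \<or> v = i" for v
      using i1 by (auto simp: mrg_def)
    moreover have "mrg (i - 1) v = Suc (i - 1) \<longleftrightarrow> v = Suc i" for v
      using i1 by (auto simp: mrg_def)
    ultimately show "(c ! q = i - 1 \<longleftrightarrow> q = q1 \<or> q = q2) \<and> (c ! q = Suc (i - 1) \<longleftrightarrow> q = q3)"
      using pos[OF ql'] by auto
  qed
  have fw: "f_word (i - 1) c = Some (map (mrg i) w')"
  proof (cases "q1 < q3 \<and> q3 < q2")
    case True
    have "f_word (i - 1) c = Some (c[q1 := Suc (i - 1)])"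
      using True q lc cpos unfolding w_def by (intro f_word_A) auto
    moreover have "c[q1 := Suc (i - 1)] = map (mrg i) w'"
    proof (rule nth_equalityI)
      show "length (c[q1 := Suc (i - 1)]) = length (map (mrg i) w')" using lc lw' by simp
      fix p assume "p < length (c[q1 := Suc (i - 1)])"
      hence p: "p < length w" using lc by simp
      show "c[q1 := Suc (i - 1)] ! p = map (mrg i) w' ! p"
        using p w'nth[OF p] True pos[OF p] i1 q lw' unfolding c_def w_def
        by (auto simp: nth_list_update mrg_def)
    qed
    ultimately show ?thesis by simp
  next
    case False
    hence o: "q3 < q1" "q1 < q2" using cs by auto
    have "f_word (i - 1) c = Some (c[q2 := Suc (i - 1)])"
      using o q lc cpos unfolding w_def by (intro f_word_B) auto
    moreover have "c[q2 := Suc (i - 1)] = map (mrg i) w'"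
    proof (rule nth_equalityI)
      show "length (c[q2 := Suc (i - 1)]) = length (map (mrg i) w')" using lc lw' by simp
      fix p assume "p < length (c[q2 := Suc (i - 1)])"
      hence p: "p < length w" using lc by simp
      show "c[q2 := Suc (i - 1)] ! p = map (mrg i) w' ! p"
        using p w'nth[OF p] False pos[OF p] i1 q lw' unfolding c_def w_def
        by (auto simp: nth_list_update mrg_def)
    qed
    ultimately show ?thesis by simp
  qed
  have cf: "crystal_f n (i - 1) b b'"
    unfolding crystal_f_def using i1 iN n fw rb rb' c_def N_def by (simp, linarith)
  have neq: "S \<noteq> S'"
  proof
    assume "S = S'"
    hence "w = w'" by (simp add: w_def w'_def)
    moreover have "q1 < length w" "q2 < length w" using q w_def by auto
    ultimately show False using w'nth[of q1] w'nth[of q2] wq i1 cs unfolding w_def by (auto split: if_splits)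
  qed
  show ?thesis unfolding CS_edge_def using S S' neq bQ bQ' cf by blast
qed

lemma pos_of_prop:
  assumes "x \<in> set w" shows "pos_of w x < length w \<and> w ! pos_of w x = x"
proof -
  have "\<exists>p. p < length w \<and> w ! p = x" using assms by (simp add: in_set_conv_nth)
  thus ?thesis unfolding pos_of_def by (rule LeastI_ex)
qed

lemma swap_swap: "swap_vals a c (swap_vals a c w) = w"
  by (induct w) (auto simp: swap_vals_def)

lemma swap_nth: "q < length w \<Longrightarrow> swap_vals a c w ! q = (if w ! q = a then c else if w ! q = c then a else w ! q)"
  by (simp add: swap_vals_def)

lemma swap_len: "length (swap_vals a c w) = length w"
  by (simp add: swap_vals_def)

theorem theorem4p1:
  fixes la :: "nat list" and n :: nat
  assumes "is_partition la" and "psize la \<le> n"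
  shows "\<forall>T T'. DE_edge la T T' \<longrightarrow> CS_edge la n T T' \<or> CS_edge la n T' T"
proof (intro allI impI)
  fix T T' assume de: "DE_edge la T T'"
  then obtain i where T: "is_SYT la T" and T': "is_SYT la T'" and i1: "1 < i" and iN: "i < psize la"
    and D: "D_word i (row_word T) = Some (row_word T')" unfolding DE_edge_def by blast
  define w where "w = row_word T"
  define w' where "w' = row_word T'"
  note Sw = SYT_word[OF T, folded w_def]
  note Sw' = SYT_word[OF T', folded w'_def]
  define pa where "pa = pos_of w (i - 1)"
  define pb where "pb = pos_of w i"
  define pc where "pc = pos_of w (Suc i)"
  have "i - 1 \<in> set w" using Sw(2) i1 iN by auto
  hence A: "pa < length w" "w ! pa = i - 1" using pos_of_prop[of "i - 1" w] pa_def by auto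
  have B: "pb < length w" "w ! pb = i" using pos_of_prop[of i w] Sw(2) i1 iN pb_def by auto
  have C: "pc < length w" "w ! pc = Suc i" using pos_of_prop[of "Suc i" w] Sw(2) i1 iN pc_def by auto
  have ne: "pa \<noteq> pb" "pb \<noteq> pc" "pa \<noteq> pc" using A B C i1 by auto
  have lw': "length w' = length w" using Sw Sw' by simp
  show "CS_edge la n T T' \<or> CS_edge la n T' T"
  proof (cases "between pb pc pa")
    case True
    hence w': "w' = swap_vals (i - 1) i w" using D unfolding D_word_def Let_def w_def w'_def pa_def pb_def pc_def by simp
    hence w: "w = swap_vals (i - 1) i w'" by (simp add: swap_swap)
    show ?thesis
    proof (cases "pa < pc")
      case True
      hence "pa < pc \<and> pc < pb" using \<open>between pb pc pa\<close> by (auto simp: between_def)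
      hence "CS_edge la n T T'"
        using main_edge[OF assms(1) T T' assms(2) i1 iN, of pa pb pc] A B C w' w_def w'_def by auto
      thus ?thesis by simp
    next
      case False
      hence o: "pb < pc \<and> pc < pa" using \<open>between pb pc pa\<close> by (auto simp: between_def)
      have "w' ! pb = i - 1" "w' ! pa = i" "w' ! pc = Suc i"
        using A B C w' i1 by (auto simp: swap_nth)
      hence "CS_edge la n T' T"
        using main_edge[OF assms(1) T' T assms(2) i1 iN, of pb pa pc] A B C o w lw' w_def w'_def by auto
      thus ?thesis by simp
    qed
  next
    case False
    hence bt: "between pb pa pc" using D unfolding D_word_def Let_def w_def pa_def pb_def pc_def
      by (auto split: if_splits)
    hence w': "w' = swap_vals i (Suc i) w" using D False unfolding D_word_def Let_def w_def w'_def pa_def pb_def pc_def by simp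
    hence w: "w = swap_vals i (Suc i) w'" by (simp add: swap_swap)
    show ?thesis
    proof (cases "pc < pa")
      case True
      hence "pc < pa \<and> pa < pb" using bt by (auto simp: between_def)
      hence "CS_edge la n T T'"
        using main_edge[OF assms(1) T T' assms(2) i1 iN, of pa pb pc] A B C w' w_def w'_def by auto
      thus ?thesis by simp
    next
      case False
      hence o: "pb < pa \<and> pa < pc" using bt by (auto simp: between_def)
      have "w' ! pa = i - 1" "w' ! pc = i" "w' ! pb = Suc i"
        using A B C w' i1 by (auto simp: swap_nth)
      hence "CS_edge la n T' T"
        using main_edge[OF assms(1) T' T assms(2) i1 iN, of pa pc pb] A B C o w lw' w_def w'_def by auto
      thus ?thesis by simp
    qed
  qed
qed

end
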